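(* Let $g\in L^2(\mathbb{R})$ with $\|g\|_\infty<\infty$ be such that $g\ast F_\mu\in L^2(\mathbb{R})$ for every $\mu\in\mathcal{P}_2(\mathbb{R})$, and let $f:\mathcal{P}_2(\mathbb{R})\to L^2(\mathbb{R})$, $f(\mu)(t):=\int g(t-\omega)F_\mu(\omega)\,d\omega=(g\ast F_\mu)(t)$, with lift $\hat f(X)=f(\mathcal{L}(X))$ on $L^2(\Omega,\mathbb{R})$. Then for all $X,Y\in L^2(\Omega,\mathbb{R})$ and $v\in L^2(\mathbb{R})$, $$\langle\hat f(X+Y),v\rangle_{L^2(\mathbb{R})}=\langle\hat f(X),v\rangle_{L^2(\mathbb{R})}-\langle\mathbb{E}[g(\cdot-X)Y],v\rangle_{L^2(\mathbb{R})}+R_v,$$ with $R_v=-\mathbb{E}\Big[\int_0^1\big((v\ast\check g)(X+\lambda Y)-(v\ast\check g)(X)\big)Y\,d\lambda\Big]$, where $\check g(s)=g(-s)$. Moreover $\sup_{\|v\|_{L^2(\mathbb{R})}\le1}|R_v|=o(\|Y\|_{L^2(\Omega,\mathbb{R})})$ as $\|Y\|_{L^2(\Omega,\mathbb{R})}\to0$; hence $\hat f$ is Fréchet differentiable with $D\hat f(X)Y(t)=-\mathbb{E}[g(t-X)Y]$.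
   Context: $(\Omega,\mathcal{F},\mathbb{P})$ complete atomless probability space, $\Omega$ Polish. $\mathcal{P}_2(\mathbb{R})$ is the set of Borel probability measures on $\mathbb{R}$ with finite second moment, $F_\mu(\omega)=\mu((-\infty,\omega])$ the distribution function, $\ast$ convolution on $\mathbb{R}$. *)

theory Defs
  imports "HOL-Probability.Probability"
begin

definition sq_int :: "(real \<Rightarrow> real) \<Rightarrow> bool" where
  "sq_int f \<longleftrightarrow> f \<in> borel_measurable lborel \<and> integrable lborel (\<lambda>t. (f t)^2)"

definition L2_inner :: "(real \<Rightarrow> real) \<Rightarrow> (real \<Rightarrow> real) \<Rightarrow> real" where
  "L2_inner a b = (LINT t|lborel. a t * b t)"

definition L2_norm :: "(real \<Rightarrow> real) \<Rightarrow> real" where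
  "L2_norm a = sqrt (LINT t|lborel. (a t)^2)"

definition RV_L2 :: "'a measure \<Rightarrow> ('a \<Rightarrow> real) \<Rightarrow> bool" where
  "RV_L2 M X \<longleftrightarrow> X \<in> borel_measurable M \<and> integrable M (\<lambda>w. (X w)^2)"

definition RV_norm :: "'a measure \<Rightarrow> ('a \<Rightarrow> real) \<Rightarrow> real" where
  "RV_norm M X = sqrt (LINT w|M. (X w)^2)"

definition P2 :: "real measure \<Rightarrow> bool" where
  "P2 \<mu> \<longleftrightarrow> prob_space \<mu> \<and> sets \<mu> = sets borel \<and> integrable \<mu> (\<lambda>x. x^2)"

definition conv_fun :: "(real \<Rightarrow> real) \<Rightarrow> (real \<Rightarrow> real) \<Rightarrow> real \<Rightarrow> real" where
  "conv_fun a b s = (LINT u|lborel. a (s - u) * b u)"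

definition gcheck :: "(real \<Rightarrow> real) \<Rightarrow> real \<Rightarrow> real" where
  "gcheck g s = g (- s)"

definition fconv :: "(real \<Rightarrow> real) \<Rightarrow> real measure \<Rightarrow> real \<Rightarrow> real" where
  "fconv g \<mu> t = (LINT w|lborel. g (t - w) * cdf \<mu> w)"

definition lift :: "(real \<Rightarrow> real) \<Rightarrow> 'a measure \<Rightarrow> ('a \<Rightarrow> real) \<Rightarrow> real \<Rightarrow> real" where
  "lift g M X = fconv g (distr M borel X)"

definition EgY :: "(real \<Rightarrow> real) \<Rightarrow> 'a measure \<Rightarrow> ('a \<Rightarrow> real) \<Rightarrow> ('a \<Rightarrow> real) \<Rightarrow> real \<Rightarrow> real" where
  "EgY g M X Y t = (LINT w|M. g (t - X w) * Y w)"

definition Rem :: "(real \<Rightarrow> real) \<Rightarrow> 'a measure \<Rightarrow> ('a \<Rightarrow> real) \<Rightarrow> ('a \<Rightarrow> real) \<Rightarrow> (real \<Rightarrow> real) \<Rightarrow> real" where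
  "Rem g M X Y v = - (LINT w|M. (LINT l:{0..1}|lborel.
      (conv_fun v (gcheck g) (X w + l * Y w) - conv_fun v (gcheck g) (X w)) * Y w))"

definition complete_measure_space :: "'a measure \<Rightarrow> bool" where
  "complete_measure_space M \<longleftrightarrow> (\<forall>A\<in>null_sets M. \<forall>B. B \<subseteq> A \<longrightarrow> B \<in> sets M)"

definition atomless :: "'a measure \<Rightarrow> bool" where
  "atomless M \<longleftrightarrow> (\<forall>A\<in>sets M. measure M A > 0 \<longrightarrow>
      (\<exists>B\<in>sets M. B \<subseteq> A \<and> 0 < measure M B \<and> measure M B < measure M A))"

end

theory Submission
  imports Defs
begin

lemma two_ab_le: "2 * \<bar>(a::real) * b\<bar> \<le> a^2 + b^2"
proof -
  have "0 \<le> (\<bar>a\<bar> - \<bar>b\<bar>)^2" by simp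
  then show ?thesis by (simp add: power2_eq_square algebra_simps abs_mult)
qed

lemma cs_integrable:
  fixes f g :: "'a \<Rightarrow> real"
  assumes [measurable]: "f \<in> borel_measurable M" "g \<in> borel_measurable M"
    and "integrable M (\<lambda>x. (f x)^2)" "integrable M (\<lambda>x. (g x)^2)"
  shows "integrable M (\<lambda>x. f x * g x)"
proof (rule Bochner_Integration.integrable_bound)
  show "integrable M (\<lambda>x. (f x)^2 + (g x)^2)" using assms by auto
  show "AE x in M. norm (f x * g x) \<le> norm ((f x)^2 + (g x)^2)"
  proof (rule AE_I2)
    fix x
    have "2 * \<bar>f x * g x\<bar> \<le> (f x)^2 + (g x)^2" by (rule two_ab_le)
    then show "norm (f x * g x) \<le> norm ((f x)^2 + (g x)^2)" by simp
  qed
qed simp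

lemma cs_ineq:
  fixes f g :: "'a \<Rightarrow> real"
  assumes [measurable]: "f \<in> borel_measurable M" "g \<in> borel_measurable M"
    and fi: "integrable M (\<lambda>x. (f x)^2)" and gi: "integrable M (\<lambda>x. (g x)^2)"
  shows "(LINT x|M. \<bar>f x * g x\<bar>) \<le> sqrt (LINT x|M. (f x)^2) * sqrt (LINT x|M. (g x)^2)"
proof -
  define II where "II = (LINT x|M. \<bar>f x * g x\<bar>)"
  define A where "A = (LINT x|M. (f x)^2)"
  define B where "B = (LINT x|M. (g x)^2)"
  have fg: "integrable M (\<lambda>x. \<bar>f x * g x\<bar>)" using cs_integrable[OF assms] by auto
  have I0: "II \<ge> 0" unfolding II_def by auto
  have A0: "A \<ge> 0" unfolding A_def by auto
  have B0: "B \<ge> 0" unfolding B_def by auto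
  have key: "0 \<le> A - 2*z*II + z^2*B" for z
  proof -
    have "0 \<le> (LINT x|M. (\<bar>f x\<bar> - z*\<bar>g x\<bar>)^2)" by auto
    also have "(LINT x|M. (\<bar>f x\<bar> - z*\<bar>g x\<bar>)^2) = (LINT x|M. (f x)^2 - 2*z*\<bar>f x * g x\<bar> + z^2 * (g x)^2)"
      by (rule Bochner_Integration.integral_cong) (auto simp: power2_eq_square algebra_simps abs_mult)
    also have "\<dots> = A - 2*z*II + z^2*B"
      unfolding A_def B_def II_def using fi gi fg by simp
    finally show ?thesis .
  qed
  have "II^2 \<le> A*B"
  proof (cases "B = 0")
    case True
    show ?thesis
    proof (rule ccontr)
      assume "\<not> ?thesis" then have "II > 0" using True I0 by auto
      with key[of "(A+1)/(2*II)"] True show False by (simp add: field_simps)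
    qed
  next
    case False
    then have Bp: "B > 0" using B0 by auto
    have "0 \<le> A - 2*(II/B)*II + (II/B)^2*B" by (rule key)
    then have "0 \<le> A - II^2/B" using Bp by (simp add: field_simps power2_eq_square)
    then show ?thesis using Bp by (simp add: field_simps)
  qed
  then have "sqrt (II^2) \<le> sqrt (A*B)" by (rule real_sqrt_le_mono)
  then show ?thesis using I0 unfolding II_def[symmetric] A_def[symmetric] B_def[symmetric] by (simp add: real_sqrt_mult)
qed

lemma trans_integral: "(LINT (x::real)|lborel. f (x + h)) = (LINT x|lborel. (f x :: real))"
  using lborel_integral_real_affine[where c=1 and t=h and f=f] by (simp add: add.commute)

lemma trans_integrable: "integrable lborel (\<lambda>x. f (x + h)) \<longleftrightarrow> integrable lborel (f :: real \<Rightarrow> real)"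
  using lborel_integrable_real_affine_iff[where c=1 and t=h and f=f] by (simp add: add.commute)

lemma inner_compact_lborel:
  fixes A :: "real set"
  assumes A: "A \<in> sets borel" and fin: "emeasure lborel A < \<infinity>" and e: "e > 0"
  obtains K where "compact K" "K \<subseteq> A" "measure lborel (A - K) < e"
proof -
  define B :: "nat \<Rightarrow> real set" where "B n = A - {- real n..real n}" for n
  have Bs: "range B \<subseteq> sets lborel" unfolding B_def using A by auto
  have Bd: "decseq B" unfolding B_def decseq_def by auto
  have Bf: "emeasure lborel (B n) \<noteq> \<infinity>" for n
    using emeasure_mono[of "B n" A lborel] A fin unfolding B_def by (auto simp: top_unique)
  have "(\<Inter>n. B n) = {}"
  proof -
    { fix x assume "x \<in> (\<Inter>n. B n)"
      moreover obtain n :: nat where "\<bar>x\<bar> \<le> real n" using real_arch_simple by blast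
      ultimately have False unfolding B_def by (auto simp: abs_le_iff) }
    then show ?thesis by auto
  qed
  with Lim_measure_decseq[OF Bs Bd Bf] have "(\<lambda>n. measure lborel (B n)) \<longlonglongrightarrow> 0" by simp
  then obtain n where n: "measure lborel (B n) < e/2"
    using e by (metis (no_types, lifting) LIMSEQ_D abs_of_nonneg diff_zero dual_order.refl half_gt_zero measure_nonneg real_norm_def)
  define S where "S = A \<inter> {- real n..real n}"
  have S: "S \<in> sets lebesgue" unfolding S_def using A by auto
  obtain T where T: "closed T" "T \<subseteq> S" "S - T \<in> lmeasurable" "emeasure lebesgue (S - T) < ennreal (e/2)"
    using sets_lebesgue_inner_closed[OF S, of "e/2"] e by auto
  have STb: "S - T \<in> sets lborel" unfolding S_def using A T(1) by auto
  have mST: "measure lborel (S - T) < e/2"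
  proof -
    have "measure lebesgue (S - T) < e/2"
      using T(3,4) e by (simp add: emeasure_eq_measure2 ennreal_less_iff)
    then show ?thesis using measure_completion[OF STb] by simp
  qed
  show ?thesis
  proof
    show "compact T" using T(1,2) unfolding S_def
      by (meson bounded_closed_interval bounded_subset compact_eq_bounded_closed le_inf_iff)
    show "T \<subseteq> A" using T(2) unfolding S_def by auto
    have "A - T \<subseteq> B n \<union> (S - T)" unfolding B_def S_def by auto
    have "measure lborel (A - T) \<le> measure lborel (B n \<union> (S - T))"
    proof (rule measure_mono_fmeasurable)
      show "A - T \<subseteq> B n \<union> (S - T)" unfolding B_def S_def by auto
      show "A - T \<in> sets lborel" using A T(1) by auto
      show "B n \<union> (S - T) \<in> fmeasurable lborel"
      proof -
        have "B n \<in> sets lborel" using Bs by auto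
        have "emeasure lborel (B n \<union> (S - T)) \<le> emeasure lborel (B n) + emeasure lborel (S - T)"
          by (rule emeasure_subadditive) (use Bs STb in auto)
        also have "\<dots> < \<infinity>" using Bf[of n] T(3) STb by (auto simp: less_top fmeasurable_def)
        finally show ?thesis using Bs STb by (auto simp: fmeasurable_def)
      qed
    qed
    also have "\<dots> \<le> measure lborel (B n) + measure lborel (S - T)"
      by (rule measure_Un_le) (use Bs STb in auto)
    finally show "measure lborel (A - T) < e" using n mST by linarith
  qed
qed

lemma ind_trans_cont:
  fixes A :: "real set"
  assumes A: "A \<in> sets borel" and fin: "emeasure lborel A < \<infinity>" and e: "e > 0"
  shows "\<exists>d>0. \<forall>h. \<bar>h\<bar> < d \<longrightarrow> (LINT x|lborel. \<bar>indicator A (x+h) - indicator A x :: real\<bar>) \<le> e"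
proof -
  obtain K where K: "compact K" "K \<subseteq> A" "measure lborel (A - K) < e/4"
    using inner_compact_lborel[OF A fin, of "e/4"] e by auto
  have Kb: "K \<in> sets borel" using K(1) by (simp add: borel_closed compact_imp_closed)
  obtain U where U: "open U" "K \<subseteq> U" "emeasure lborel (U - K) < e/4"
    using outer_regular_lborel[OF Kb, of "e/4"] e by auto
  obtain d where d: "d > 0" "(\<Union>x\<in>K. ball x d) \<subseteq> U"
    using compact_subset_open_imp_ball_epsilon_subset[OF K(1) U(1,2)] by auto
  have AKs: "A - K \<in> sets lborel" using A Kb by auto
  have UKs: "U - K \<in> sets lborel" using U(1) Kb by auto
  have AKf: "emeasure lborel (A - K) < \<infinity>"
    using emeasure_mono[of "A - K" A lborel] A fin by (auto simp: top_unique)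
  have UKf: "emeasure lborel (U - K) < \<infinity>" using U(3) less_trans by (auto simp: less_top[symmetric])
  have mUK: "measure lborel (U - K) < e/4"
    using U(3) e emeasure_eq_ennreal_measure[of lborel "U - K"] UKf
    by (simp add: ennreal_less_iff less_top)
  define a where "a = (indicator (A - K) :: real \<Rightarrow> real)"
  define b where "b = (indicator (U - K) :: real \<Rightarrow> real)"
  have ai: "integrable lborel a" unfolding a_def using AKs AKf by auto
  have bi: "integrable lborel b" unfolding b_def using UKs UKf by auto
  have ia: "(LINT x|lborel. a x) = measure lborel (A - K)" unfolding a_def by simp
  have ib: "(LINT x|lborel. b x) = measure lborel (U - K)" unfolding b_def by simp
  show ?thesis
  proof (intro exI[of _ d] conjI allI impI)
    show "d > 0" by fact
    fix h :: real assume h: "\<bar>h\<bar> < d"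
    have ai': "integrable lborel (\<lambda>x. a (x + h))" using ai trans_integrable by blast
    have bi': "integrable lborel (\<lambda>x. b (x + h))" using bi trans_integrable by blast
    have pw: "\<bar>indicator A (x+h) - indicator A x :: real\<bar> \<le> a (x + h) + a x + b (x + h) + b x" for x
    proof -
      have inU1: "x \<in> U" if "x + h \<in> K"
      proof -
        have "x \<in> ball (x + h) d" using h by (simp add: dist_real_def)
        then show ?thesis using d(2) that by blast
      qed
      have inU2: "x + h \<in> U" if "x \<in> K"
      proof -
        have "x + h \<in> ball x d" using h by (simp add: dist_real_def)
        then show ?thesis using d(2) that by blast
      qed
      show ?thesis unfolding a_def b_def using inU1 inU2 K(2)
        by (auto simp: indicator_def)
    qed
    have "(LINT x|lborel. \<bar>indicator A (x+h) - indicator A x :: real\<bar>) \<le>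
          (LINT x|lborel. a (x + h) + a x + b (x + h) + b x)"
    proof (rule integral_mono)
      show "integrable lborel (\<lambda>x. a (x + h) + a x + b (x + h) + b x)" using ai bi ai' bi' by auto
      show "integrable lborel (\<lambda>x. \<bar>indicator A (x+h) - indicator A x :: real\<bar>)"
      proof (rule Bochner_Integration.integrable_bound)
        show "integrable lborel (\<lambda>x. a (x + h) + a x + b (x + h) + b x)" using ai bi ai' bi' by auto
        show "(\<lambda>x. \<bar>indicator A (x+h) - indicator A x :: real\<bar>) \<in> borel_measurable lborel" using A by measurable
        show "AE x in lborel. norm (\<bar>indicator A (x+h) - indicator A x :: real\<bar>) \<le> norm (a (x + h) + a x + b (x + h) + b x)"
          using pw by (auto simp: a_def b_def)
      qed
    qed (use pw in auto)
    also have "\<dots> = (LINT x|lborel. a (x + h)) + (LINT x|lborel. a x) + (LINT x|lborel. b (x + h)) + (LINT x|lborel. b x)"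
      using ai bi ai' bi' by simp
    also have "\<dots> = 2 * measure lborel (A - K) + 2 * measure lborel (U - K)"
      using ia ib trans_integral[of a h] trans_integral[of b h] by simp
    also have "\<dots> \<le> e" using K(3) mUK by simp
    finally show "(LINT x|lborel. \<bar>indicator A (x+h) - indicator A x :: real\<bar>) \<le> e" .
  qed
qed

lemma trans_integrable_diff:
  fixes f :: "real \<Rightarrow> real"
  assumes "integrable lborel f"
  shows "integrable lborel (\<lambda>x. \<bar>f (x+h) - f x\<bar>)"
proof -
  have "integrable lborel (\<lambda>x. f (x+h))" using assms trans_integrable by blast
  then show ?thesis using assms by auto
qed

lemma L1_trans_cont:
  fixes f :: "real \<Rightarrow> real"
  assumes "integrable lborel f"
  shows "\<forall>e>0. \<exists>d>0. \<forall>h. \<bar>h\<bar> < d \<longrightarrow> (LINT x|lborel. \<bar>f (x+h) - f x\<bar>) \<le> e"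
  using assms
proof (induct rule: integrable_induct)
  case (base A c)
  show ?case
  proof (intro allI impI)
    fix e :: real assume e: "e > 0"
    have A: "A \<in> sets borel" using base by simp
    obtain d where d: "d > 0" "\<And>h. \<bar>h\<bar> < d \<Longrightarrow> (LINT x|lborel. \<bar>indicator A (x+h) - indicator A x :: real\<bar>) \<le> e / (\<bar>c\<bar> + 1)"
      using ind_trans_cont[OF A base(2), of "e / (\<bar>c\<bar> + 1)"] e by auto
    show "\<exists>d>0. \<forall>h. \<bar>h\<bar> < d \<longrightarrow> (LINT x|lborel. \<bar>indicator A (x+h) *\<^sub>R c - indicator A x *\<^sub>R c\<bar>) \<le> e"
    proof (intro exI[of _ d] conjI allI impI)
      show "d > 0" by fact
      fix h :: real assume h: "\<bar>h\<bar> < d"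
      have "(LINT x|lborel. \<bar>indicator A (x+h) *\<^sub>R c - indicator A x *\<^sub>R c\<bar>)
          = (LINT x|lborel. \<bar>c\<bar> * \<bar>indicator A (x+h) - indicator A x :: real\<bar>)"
        by (rule Bochner_Integration.integral_cong) (auto simp: abs_mult[symmetric] algebra_simps)
      also have "\<dots> = \<bar>c\<bar> * (LINT x|lborel. \<bar>indicator A (x+h) - indicator A x :: real\<bar>)" by simp
      also have "\<dots> \<le> \<bar>c\<bar> * (e / (\<bar>c\<bar> + 1))" using d(2)[OF h] by (intro mult_left_mono) auto
      also have "\<dots> \<le> e" using e by (simp add: field_simps)
      finally show "(LINT x|lborel. \<bar>indicator A (x+h) *\<^sub>R c - indicator A x *\<^sub>R c\<bar>) \<le> e" .
    qed
  qed
next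
  case (add f g)
  show ?case
  proof (intro allI impI)
    fix e :: real assume e: "e > 0"
    obtain d1 where d1: "d1 > 0" "\<And>h. \<bar>h\<bar> < d1 \<Longrightarrow> (LINT x|lborel. \<bar>f (x+h) - f x\<bar>) \<le> e/2"
      using add(2) e by (meson half_gt_zero)
    obtain d2 where d2: "d2 > 0" "\<And>h. \<bar>h\<bar> < d2 \<Longrightarrow> (LINT x|lborel. \<bar>g (x+h) - g x\<bar>) \<le> e/2"
      using add(4) e by (meson half_gt_zero)
    show "\<exists>d>0. \<forall>h. \<bar>h\<bar> < d \<longrightarrow> (LINT x|lborel. \<bar>(f (x+h) + g (x+h)) - (f x + g x)\<bar>) \<le> e"
    proof (intro exI[of _ "min d1 d2"] conjI allI impI)
      show "min d1 d2 > 0" using d1 d2 by simp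
      fix h :: real assume h: "\<bar>h\<bar> < min d1 d2"
      have i1: "integrable lborel (\<lambda>x. \<bar>f (x+h) - f x\<bar>)" using add(1) by (rule trans_integrable_diff)
      have i2: "integrable lborel (\<lambda>x. \<bar>g (x+h) - g x\<bar>)" using add(3) by (rule trans_integrable_diff)
      have "(LINT x|lborel. \<bar>(f (x+h) + g (x+h)) - (f x + g x)\<bar>) \<le> (LINT x|lborel. \<bar>f (x+h) - f x\<bar> + \<bar>g (x+h) - g x\<bar>)"
      proof (rule integral_mono)
        show "integrable lborel (\<lambda>x. \<bar>(f (x+h) + g (x+h)) - (f x + g x)\<bar>)"
          using trans_integrable_diff[OF Bochner_Integration.integrable_add[OF add(1) add(3)], of h] by simp
      qed (use i1 i2 in auto)
      also have "\<dots> = (LINT x|lborel. \<bar>f (x+h) - f x\<bar>) + (LINT x|lborel. \<bar>g (x+h) - g x\<bar>)"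
        using i1 i2 by simp
      also have "\<dots> \<le> e" using d1(2)[of h] d2(2)[of h] h by simp
      finally show "(LINT x|lborel. \<bar>(f (x+h) + g (x+h)) - (f x + g x)\<bar>) \<le> e" .
    qed
  qed
next
  case (lim f s)
  have fm[measurable]: "f \<in> borel_measurable lborel" using lim(5) by auto
  have sm[measurable]: "s i \<in> borel_measurable lborel" for i using lim(1) by auto
  have conv: "(\<lambda>i. LINT x|lborel. \<bar>s i x - f x\<bar>) \<longlonglongrightarrow> (LINT (x::real)|lborel. (0::real))"
  proof (rule integral_dominated_convergence[where w="\<lambda>x. 3 * \<bar>f x\<bar>" and s="\<lambda>i x. \<bar>s i x - f x\<bar>" and f="\<lambda>x::real. 0::real" and M=lborel])
    show "integrable lborel (\<lambda>x. 3 * \<bar>f x\<bar>)" using lim(5) by auto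
    show "AE x in lborel. (\<lambda>i. \<bar>s i x - f x\<bar>) \<longlonglongrightarrow> 0"
    proof (rule AE_I2)
      fix x
      have "(\<lambda>i. s i x - f x) \<longlonglongrightarrow> f x - f x" using lim(3)[of x] by (intro tendsto_diff) auto
      then have "(\<lambda>i. \<bar>s i x - f x\<bar>) \<longlonglongrightarrow> \<bar>f x - f x\<bar>" by (rule tendsto_rabs)
      then show "(\<lambda>i. \<bar>s i x - f x\<bar>) \<longlonglongrightarrow> 0" by simp
    qed
    show "AE x in lborel. norm \<bar>s i x - f x\<bar> \<le> 3 * \<bar>f x\<bar>" for i
      using lim(4)[of x i] by (intro AE_I2) (smt (verit, best) UNIV_I lim(4) real_norm_def space_lborel)
  qed auto
  show ?case
  proof (intro allI impI)
    fix e :: real assume e: "e > 0"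
    from conv have "\<exists>i. (LINT x|lborel. \<bar>s i x - f x\<bar>) < e/3"
      using e by (fastforce dest!: LIMSEQ_D[where r="e/3"])
    then obtain i where i: "(LINT x|lborel. \<bar>s i x - f x\<bar>) < e/3" by auto
    obtain d where d: "d > 0" "\<And>h. \<bar>h\<bar> < d \<Longrightarrow> (LINT x|lborel. \<bar>s i (x+h) - s i x\<bar>) \<le> e/3"
      using lim(2)[of i] e by (meson divide_pos_pos zero_less_numeral)
    show "\<exists>d>0. \<forall>h. \<bar>h\<bar> < d \<longrightarrow> (LINT x|lborel. \<bar>f (x+h) - f x\<bar>) \<le> e"
    proof (intro exI[of _ d] conjI allI impI)
      show "d > 0" by fact
      fix h :: real assume h: "\<bar>h\<bar> < d"
      have sfi: "integrable lborel (\<lambda>x. \<bar>s i x - f x\<bar>)" using lim(1)[of i] lim(5) by auto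
      have sfi': "integrable lborel (\<lambda>x. \<bar>s i (x+h) - f (x+h)\<bar>)"
        using sfi trans_integrable[of "\<lambda>x. \<bar>s i x - f x\<bar>" h] by simp
      have ssi: "integrable lborel (\<lambda>x. \<bar>s i (x+h) - s i x\<bar>)" using lim(1)[of i] by (rule trans_integrable_diff)
      have "(LINT x|lborel. \<bar>f (x+h) - f x\<bar>) \<le> (LINT x|lborel. \<bar>s i (x+h) - f (x+h)\<bar> + \<bar>s i (x+h) - s i x\<bar> + \<bar>s i x - f x\<bar>)"
      proof (rule integral_mono)
        show "integrable lborel (\<lambda>x. \<bar>f (x+h) - f x\<bar>)" using lim(5) by (rule trans_integrable_diff)
      qed (use sfi sfi' ssi in auto)
      also have "\<dots> = (LINT x|lborel. \<bar>s i (x+h) - f (x+h)\<bar>) + (LINT x|lborel. \<bar>s i (x+h) - s i x\<bar>) + (LINT x|lborel. \<bar>s i x - f x\<bar>)"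
        using sfi sfi' ssi by simp
      also have "(LINT x|lborel. \<bar>s i (x+h) - f (x+h)\<bar>) = (LINT x|lborel. \<bar>s i x - f x\<bar>)"
        using trans_integral[of "\<lambda>x. \<bar>s i x - f x\<bar>" h] by simp
      finally show "(LINT x|lborel. \<bar>f (x+h) - f x\<bar>) \<le> e" using i d(2)[OF h] by linarith
    qed
  qed
qed

definition Dfun :: "real \<Rightarrow> real \<Rightarrow> real \<Rightarrow> real" where
  "Dfun x y w = indicator {x+y..} w - indicator {x..} w"

lemma Dfun_alt: "Dfun x y w = (if x + y \<le> w then 1 else 0) - (if x \<le> w then 1 else 0)"
  unfolding Dfun_def by (auto simp: indicator_def)

lemma Dfun_measurable[measurable (raw)]:
  assumes [measurable]: "f \<in> borel_measurable M" "g \<in> borel_measurable M" "h \<in> borel_measurable M"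
  shows "(\<lambda>z. Dfun (f z) (g z) (h z)) \<in> borel_measurable M"
  unfolding Dfun_alt by measurable

lemma Dfun_abs: "\<bar>Dfun x y w\<bar> = indicator {min x (x+y)..<max x (x+y)} w"
  unfolding Dfun_def by (auto simp: indicator_def)

lemma Dfun_abs_int: "integrable lborel (\<lambda>w. \<bar>Dfun x y w\<bar>)" "(LINT w|lborel. \<bar>Dfun x y w\<bar>) = \<bar>y\<bar>"
proof -
  show "integrable lborel (\<lambda>w. \<bar>Dfun x y w\<bar>)" unfolding Dfun_abs by simp
  have "(LINT w|lborel. \<bar>Dfun x y w\<bar>) = measure lborel {min x (x+y)..<max x (x+y)}"
    unfolding Dfun_abs by simp
  then show "(LINT w|lborel. \<bar>Dfun x y w\<bar>) = \<bar>y\<bar>" by auto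
qed

lemma Dfun_int: "integrable lborel (Dfun x y)"
proof -
  have "Dfun x y \<in> borel_measurable lborel" by measurable
  then show ?thesis using Dfun_abs_int(1)[of x y] integrable_abs_iff by blast
qed

lemma Dfun_subst:
  fixes \<phi> :: "real \<Rightarrow> real"
  assumes [measurable]: "\<phi> \<in> borel_measurable borel"
  shows "(LINT w|lborel. Dfun x y w * \<phi> w) = - y * (LINT l:{0..1}|lborel. \<phi> (x + l*y))"
proof (cases "y = 0")
  case True then show ?thesis by (simp add: Dfun_def)
next
  case False
  have aff: "(LINT w|lborel. Dfun x y w * \<phi> w) = \<bar>y\<bar> * (LINT l|lborel. Dfun x y (x + y*l) * \<phi> (x + y*l))"
    using lborel_integral_real_affine[where c=y and t=x and f="\<lambda>w. Dfun x y w * \<phi> w"] False by simp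
  have m1[measurable]: "(\<lambda>l. \<phi> (x + l*y)) \<in> borel_measurable borel" by measurable
  show ?thesis
  proof (cases "y > 0")
    case True
    have "(LINT l|lborel. Dfun x y (x + y*l) * \<phi> (x + y*l)) = (LINT l|lborel. - (indicator {0..<1} l * \<phi> (x + l*y)))"
    proof (rule Bochner_Integration.integral_cong)
      fix l :: real
      have e1: "x + y \<le> x + y*l \<longleftrightarrow> 1 \<le> l" using True by (simp add: mult_le_cancel_left1)
      have e2: "x \<le> x + y*l \<longleftrightarrow> 0 \<le> l" using True by (simp add: zero_le_mult_iff)
      show "Dfun x y (x + y*l) * \<phi> (x + y*l) = - (indicator {0..<1} l * \<phi> (x + l*y))"
        unfolding Dfun_def indicator_def using e1 e2 by (auto simp: mult.commute)
    qed simp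
    also have "\<dots> = - (LINT l|lborel. indicator {0..1} l * \<phi> (x + l*y))"
    proof -
      have "(LINT l|lborel. indicator {0..<1} l * \<phi> (x + l*y)) = (LINT l|lborel. indicator {0..1} l * \<phi> (x + l*y))"
      proof (rule integral_cong_AE)
        show "AE l in lborel. indicator {0..<1} l * \<phi> (x + l*y) = indicator {0..1} l * \<phi> (x + l*y)"
          using AE_lborel_singleton[of 1] by eventually_elim (auto simp: indicator_def)
      qed measurable
      then show ?thesis by simp
    qed
    finally show ?thesis using aff True by (simp add: set_lebesgue_integral_def)
  next
    case neg: False
    then have yn: "y < 0" using \<open>y \<noteq> 0\<close> by simp
    have "(LINT l|lborel. Dfun x y (x + y*l) * \<phi> (x + y*l)) = (LINT l|lborel. indicator {0<..1} l * \<phi> (x + l*y))"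
    proof (rule Bochner_Integration.integral_cong)
      fix l :: real
      have e1: "x + y \<le> x + y*l \<longleftrightarrow> l \<le> 1" using yn by (simp add: mult_le_cancel_left1)
      have e2: "x \<le> x + y*l \<longleftrightarrow> l \<le> 0" using yn by (simp add: zero_le_mult_iff)
      show "Dfun x y (x + y*l) * \<phi> (x + y*l) = indicator {0<..1} l * \<phi> (x + l*y)"
        unfolding Dfun_def indicator_def using e1 e2 by (auto simp: mult.commute)
    qed simp
    also have "\<dots> = (LINT l|lborel. indicator {0..1} l * \<phi> (x + l*y))"
    proof (rule integral_cong_AE)
      show "AE l in lborel. indicator {0<..1} l * \<phi> (x + l*y) = indicator {0..1} l * \<phi> (x + l*y)"
        using AE_lborel_singleton[of 0] by eventually_elim (auto simp: indicator_def)
    qed measurable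
    finally show ?thesis using aff yn by (simp add: set_lebesgue_integral_def)
  qed
qed

lemma sq_sign_ineq: "((a::real) - b)^2 \<le> 2 * \<bar>a * \<bar>a\<bar> - b * \<bar>b\<bar>\<bar>"
proof -
  have q1: "(a - b)^2 \<le> 2 * (a^2 + b^2)"
  proof -
    have "0 \<le> (a+b)^2" by simp
    then show ?thesis by (simp add: power2_eq_square algebra_simps)
  qed
  have q2: "(a - b)^2 \<le> \<bar>(a - b) * (a + b)\<bar>" if "0 \<le> a * b"
  proof -
    have "\<bar>a - b\<bar> \<le> \<bar>a + b\<bar>" using that
      by (cases "0 \<le> a"; cases "0 \<le> b") (auto simp: zero_le_mult_iff)
    then have "\<bar>a - b\<bar> * \<bar>a - b\<bar> \<le> \<bar>a - b\<bar> * \<bar>a + b\<bar>" by (intro mult_left_mono) auto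
    then show ?thesis by (simp add: power2_eq_square abs_mult[symmetric])
  qed
  show ?thesis
  proof (cases "0 \<le> a")
    case a: True
    show ?thesis
    proof (cases "0 \<le> b")
      case b: True
      have "\<bar>(a - b) * (a + b)\<bar> = \<bar>a * \<bar>a\<bar> - b * \<bar>b\<bar>\<bar>" using a b by (simp add: algebra_simps)
      moreover have "0 \<le> a * b" using a b by simp
      ultimately have "(a - b)^2 \<le> \<bar>a * \<bar>a\<bar> - b * \<bar>b\<bar>\<bar>" using q2 by simp
      then show ?thesis by (rule order.trans) simp
    next
      case b: False
      have "a * \<bar>a\<bar> - b * \<bar>b\<bar> = a^2 + b^2" using a b by (simp add: power2_eq_square)
      then show ?thesis using q1 by simp
    qed
  next
    case a: False
    show ?thesis
    proof (cases "0 \<le> b")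
      case b: True
      have "a * \<bar>a\<bar> - b * \<bar>b\<bar> = - (a^2 + b^2)" using a b by (simp add: power2_eq_square)
      then show ?thesis using q1 by simp
    next
      case b: False
      have "\<bar>(a - b) * (a + b)\<bar> = \<bar>a * \<bar>a\<bar> - b * \<bar>b\<bar>\<bar>" using a b by (simp add: algebra_simps abs_minus_commute)
      moreover have "0 \<le> a * b" using a b by (simp add: zero_le_mult_iff)
      ultimately have "(a - b)^2 \<le> \<bar>a * \<bar>a\<bar> - b * \<bar>b\<bar>\<bar>" using q2 by simp
      then show ?thesis by (rule order.trans) simp
    qed
  qed
qed

lemma sq_diff_int:
  fixes a b :: "'a \<Rightarrow> real"
  assumes [measurable]: "a \<in> borel_measurable M" "b \<in> borel_measurable M"
    and "integrable M (\<lambda>x. (a x)^2)" "integrable M (\<lambda>x. (b x)^2)"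
  shows "integrable M (\<lambda>x. (a x - b x)^2)"
proof (rule Bochner_Integration.integrable_bound)
  show "integrable M (\<lambda>x. 2 * (a x)^2 + 2 * (b x)^2)" using assms by auto
  show "AE x in M. norm ((a x - b x)^2) \<le> norm (2 * (a x)^2 + 2 * (b x)^2)"
  proof (rule AE_I2)
    fix x
    have "0 \<le> (a x + b x)^2" by simp
    then have "(a x - b x)^2 \<le> 2 * (a x)^2 + 2 * (b x)^2"
      by (simp add: power2_eq_square algebra_simps)
    then show "norm ((a x - b x)^2) \<le> norm (2 * (a x)^2 + 2 * (b x)^2)" by simp
  qed
qed simp

lemma shift_sq:
  fixes g :: "real \<Rightarrow> real"
  assumes "sq_int g"
  shows "integrable lborel (\<lambda>t. (g (t - s))^2)" "(LINT t|lborel. (g (t - s))^2) = (LINT t|lborel. (g t)^2)"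
proof -
  have gi: "integrable lborel (\<lambda>t. (g t)^2)" using assms unfolding sq_int_def by auto
  show "integrable lborel (\<lambda>t. (g (t - s))^2)"
    using trans_integrable[of "\<lambda>t. (g t)^2" "-s"] gi by simp
  show "(LINT t|lborel. (g (t - s))^2) = (LINT t|lborel. (g t)^2)"
    using trans_integral[of "\<lambda>t. (g t)^2" "-s"] by simp
qed

lemma shift_meas:
  fixes g :: "real \<Rightarrow> real"
  assumes "sq_int g"
  shows "(\<lambda>t. g (t - s)) \<in> borel_measurable lborel"
proof -
  have [measurable]: "g \<in> borel_measurable borel" using assms unfolding sq_int_def by auto
  show ?thesis by measurable
qed

lemma L2_trans_cont:
  fixes g :: "real \<Rightarrow> real"
  assumes g: "sq_int g"
  shows "\<forall>e>0. \<exists>d>0. \<forall>h. \<bar>h\<bar> < d \<longrightarrow> (LINT x|lborel. (g (x+h) - g x)^2) \<le> e"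
proof (intro allI impI)
  fix e :: real assume e: "e > 0"
  have gm[measurable]: "g \<in> borel_measurable borel" and g2: "integrable lborel (\<lambda>x. (g x)^2)"
    using g unfolding sq_int_def by auto
  define \<phi> where "\<phi> x = g x * \<bar>g x\<bar>" for x
  have \<phi>i: "integrable lborel \<phi>"
  proof (rule Bochner_Integration.integrable_bound[OF g2])
    show "\<phi> \<in> borel_measurable lborel" unfolding \<phi>_def by measurable
    show "AE x in lborel. norm (\<phi> x) \<le> norm ((g x)^2)" unfolding \<phi>_def
      by (intro AE_I2) (simp add: abs_mult power2_eq_square)
  qed
  obtain d where d: "d > 0" "\<And>h. \<bar>h\<bar> < d \<Longrightarrow> (LINT x|lborel. \<bar>\<phi> (x+h) - \<phi> x\<bar>) \<le> e/2"
    using L1_trans_cont[OF \<phi>i] e by (meson half_gt_zero)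
  show "\<exists>d>0. \<forall>h. \<bar>h\<bar> < d \<longrightarrow> (LINT x|lborel. (g (x+h) - g x)^2) \<le> e"
  proof (intro exI[of _ d] conjI allI impI)
    show "d > 0" by fact
    fix h :: real assume h: "\<bar>h\<bar> < d"
    have g2h: "integrable lborel (\<lambda>x. (g (x+h))^2)" using trans_integrable[of "\<lambda>x. (g x)^2" h] g2 by simp
    have "(LINT x|lborel. (g (x+h) - g x)^2) \<le> (LINT x|lborel. 2 * \<bar>\<phi> (x+h) - \<phi> x\<bar>)"
    proof (rule integral_mono)
      show "integrable lborel (\<lambda>x. (g (x+h) - g x)^2)" by (rule sq_diff_int) (use g2h g2 in auto)
      show "integrable lborel (\<lambda>x. 2 * \<bar>\<phi> (x+h) - \<phi> x\<bar>)" using trans_integrable_diff[OF \<phi>i, of h] by auto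
      show "(g (x+h) - g x)^2 \<le> 2 * \<bar>\<phi> (x+h) - \<phi> x\<bar>" for x unfolding \<phi>_def by (rule sq_sign_ineq)
    qed
    also have "\<dots> = 2 * (LINT x|lborel. \<bar>\<phi> (x+h) - \<phi> x\<bar>)" by simp
    also have "\<dots> \<le> e" using d(2)[OF h] by simp
    finally show "(LINT x|lborel. (g (x+h) - g x)^2) \<le> e" .
  qed
qed

definition pv :: "(real \<Rightarrow> real) \<Rightarrow> (real \<Rightarrow> real) \<Rightarrow> real \<Rightarrow> real" where
  "pv g v s = (LINT t|lborel. v t * g (t - s))"

lemma conv_pv: "conv_fun v (gcheck g) s = pv g v s"
  unfolding conv_fun_def gcheck_def pv_def
  using lborel_integral_real_affine[where c="-1" and t=s and f="\<lambda>u. v (s - u) * g (- u)"] by simp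

lemma pv_int:
  assumes v: "sq_int v" and g: "sq_int g"
  shows "integrable lborel (\<lambda>t. v t * g (t - s))"
  using cs_integrable[of v lborel "\<lambda>t. g (t - s)"] v shift_sq[OF g] shift_meas[OF g]
  unfolding sq_int_def by auto

lemma pv_absbound:
  assumes v: "sq_int v" and g: "sq_int g"
  shows "(LINT t|lborel. \<bar>v t * g (t - s)\<bar>) \<le> L2_norm v * L2_norm g"
  using cs_ineq[of v lborel "\<lambda>t. g (t - s)"] v shift_sq[OF g] shift_meas[OF g]
  unfolding sq_int_def L2_norm_def by auto

lemma pv_bound:
  assumes v: "sq_int v" and g: "sq_int g"
  shows "\<bar>pv g v s\<bar> \<le> L2_norm v * L2_norm g"
proof -
  have "\<bar>pv g v s\<bar> \<le> (LINT t|lborel. \<bar>v t * g (t - s)\<bar>)"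
    unfolding pv_def using integral_norm_bound[of lborel "\<lambda>t. v t * g (t - s)"] by simp
  then show ?thesis using pv_absbound[OF v g, of s] by linarith
qed

lemma pv_lip:
  assumes v: "sq_int v" and g: "sq_int g"
  shows "\<bar>pv g v (s+h) - pv g v s\<bar> \<le> L2_norm v * sqrt (LINT x|lborel. (g (x - h) - g x)^2)"
proof -
  have gm[measurable]: "g \<in> borel_measurable borel" and g2: "integrable lborel (\<lambda>x. (g x)^2)"
    using g unfolding sq_int_def by auto
  have vm[measurable]: "v \<in> borel_measurable borel" and v2: "integrable lborel (\<lambda>x. (v x)^2)"
    using v unfolding sq_int_def by auto
  define k where "k t = g (t - (s+h)) - g (t - s)" for t
  have km[measurable]: "k \<in> borel_measurable borel" unfolding k_def by measurable
  have k2: "integrable lborel (\<lambda>t. (k t)^2)" unfolding k_def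
    by (rule sq_diff_int) (use shift_sq[OF g] in auto)
  have "pv g v (s+h) - pv g v s = (LINT t|lborel. v t * k t)"
    unfolding pv_def k_def using pv_int[OF v g, of "s+h"] pv_int[OF v g, of s]
    by (simp add: right_diff_distrib)
  then have "\<bar>pv g v (s+h) - pv g v s\<bar> \<le> (LINT t|lborel. \<bar>v t * k t\<bar>)"
    using integral_norm_bound[of lborel "\<lambda>t. v t * k t"] by simp
  also have "\<dots> \<le> sqrt (LINT t|lborel. (v t)^2) * sqrt (LINT t|lborel. (k t)^2)"
    by (rule cs_ineq) (use v2 k2 in auto)
  also have "(LINT t|lborel. (k t)^2) = (LINT x|lborel. (g (x - h) - g x)^2)"
    using trans_integral[of "\<lambda>x. (g (x - h) - g x)^2" "-s"] unfolding k_def by (simp add: algebra_simps)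
  finally show ?thesis unfolding L2_norm_def .
qed

lemma pv_meas[measurable]:
  assumes v: "sq_int v" and g: "sq_int g"
  shows "pv g v \<in> borel_measurable borel"
proof -
  have gm[measurable]: "g \<in> borel_measurable borel" using g unfolding sq_int_def by auto
  have vm[measurable]: "v \<in> borel_measurable borel" using v unfolding sq_int_def by auto
  have "(\<lambda>s. LINT t|lborel. v t * g (t - s)) \<in> borel_measurable borel"
    by (rule lborel.borel_measurable_lebesgue_integral) measurable
  then show ?thesis unfolding pv_def[abs_def] .
qed

lemma RV_facts:
  assumes P: "prob_space M" and Y: "RV_L2 M Y"
  shows "Y \<in> borel_measurable M" "integrable M (\<lambda>w. (Y w)^2)" "integrable M Y"
    "integrable M (\<lambda>w. \<bar>Y w\<bar>)" "(LINT w|M. \<bar>Y w\<bar>) \<le> RV_norm M Y"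
proof -
  interpret prob_space M by fact
  show Ym: "Y \<in> borel_measurable M" and Y2: "integrable M (\<lambda>w. (Y w)^2)" using Y unfolding RV_L2_def by auto
  show Yi: "integrable M Y" by (rule square_integrable_imp_integrable[OF Ym Y2])
  then show "integrable M (\<lambda>w. \<bar>Y w\<bar>)" by auto
  have "(LINT w|M. \<bar>Y w * 1\<bar>) \<le> sqrt (LINT w|M. (Y w)^2) * sqrt (LINT w|M. 1^2)"
    by (rule cs_ineq) (use Ym Y2 in auto)
  then show "(LINT w|M. \<bar>Y w\<bar>) \<le> RV_norm M Y" unfolding RV_norm_def by (simp add: prob_space)
qed

lemma EgY_sq:
  assumes P: "prob_space M" and g: "sq_int g" and X: "RV_L2 M X" and Y: "RV_L2 M Y"
  shows "sq_int (EgY g M X Y)" "(LINT t|lborel. (EgY g M X Y t)^2) \<le> (LINT t|lborel. (g t)^2) * (LINT w|M. (Y w)^2)"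
proof -
  interpret prob_space M by fact
  interpret P: pair_sigma_finite M lborel by unfold_locales
  have gm[measurable]: "g \<in> borel_measurable borel" and g2: "integrable lborel (\<lambda>x. (g x)^2)"
    using g unfolding sq_int_def by auto
  have Xm[measurable]: "X \<in> borel_measurable M" using X unfolding RV_L2_def by auto
  have Ym[measurable]: "Y \<in> borel_measurable M" and Y2: "integrable M (\<lambda>w. (Y w)^2)" using Y unfolding RV_L2_def by auto
  define F where "F w t = (g (t - X w) * Y w)^2" for w t
  have Fm[measurable]: "case_prod F \<in> borel_measurable (M \<Otimes>\<^sub>M lborel)" unfolding F_def by measurable
  have Ft: "(LINT t|lborel. F w t) = (Y w)^2 * (LINT t|lborel. (g t)^2)" for w
  proof -
    have "(LINT t|lborel. F w t) = (LINT t|lborel. (Y w)^2 * (g (t - X w))^2)"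
      unfolding F_def by (simp add: power_mult_distrib mult.commute)
    also have "\<dots> = (Y w)^2 * (LINT t|lborel. (g (t - X w))^2)" by simp
    also have "\<dots> = (Y w)^2 * (LINT t|lborel. (g t)^2)" using shift_sq(2)[OF g] by simp
    finally show ?thesis .
  qed
  have Fti: "integrable lborel (F w)" for w
    unfolding F_def power_mult_distrib using shift_sq(1)[OF g, of "X w"] by auto
  have Fint: "integrable (M \<Otimes>\<^sub>M lborel) (case_prod F)"
  proof (rule P.Fubini_integrable)
    show "integrable M (\<lambda>x. LINT y|lborel. norm (case_prod F (x, y)))"
      using Ft Y2 by (simp add: F_def)
    show "AE x in M. integrable lborel (\<lambda>y. case_prod F (x, y))" using Fti by simp
  qed fact
  have AEi: "AE t in lborel. integrable M (\<lambda>w. F w t)" using P.AE_integrable_snd[OF Fint] .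
  have Ii: "integrable lborel (\<lambda>t. LINT w|M. F w t)" using P.integrable_snd[OF Fint] .
  have II: "(LINT t|lborel. LINT w|M. F w t) = (LINT t|lborel. (g t)^2) * (LINT w|M. (Y w)^2)"
  proof -
    have "(LINT t|lborel. LINT w|M. F w t) = (LINT w|M. LINT t|lborel. F w t)"
      using P.integral_snd[OF Fint] P.integral_fst[OF Fint] by simp
    also have "\<dots> = (LINT w|M. (Y w)^2 * (LINT t|lborel. (g t)^2))" using Ft by simp
    also have "\<dots> = (LINT t|lborel. (g t)^2) * (LINT w|M. (Y w)^2)" by (simp add: mult.commute)
    finally show ?thesis .
  qed
  have Em[measurable]: "EgY g M X Y \<in> borel_measurable lborel"
  proof -
    have "(\<lambda>t. LINT w|M. g (t - X w) * Y w) \<in> borel_measurable lborel"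
      by (rule borel_measurable_lebesgue_integral) measurable
    then show ?thesis unfolding EgY_def[abs_def] .
  qed
  have pw: "AE t in lborel. norm ((EgY g M X Y t)^2) \<le> norm (LINT w|M. F w t)"
    using AEi
  proof eventually_elim
    case (elim t)
    have Zm: "(\<lambda>w. g (t - X w) * Y w) \<in> borel_measurable M" by measurable
    have "(LINT w|M. \<bar>g (t - X w) * Y w * 1\<bar>) \<le> sqrt (LINT w|M. (g (t - X w) * Y w)^2) * sqrt (LINT w|M. 1^2)"
      by (rule cs_ineq) (use Zm elim in \<open>auto simp: F_def\<close>)
    then have b: "(LINT w|M. \<bar>g (t - X w) * Y w\<bar>) \<le> sqrt (LINT w|M. F w t)"
      by (simp add: prob_space F_def)
    have a: "\<bar>LINT w|M. g (t - X w) * Y w\<bar> \<le> (LINT w|M. \<bar>g (t - X w) * Y w\<bar>)"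
      using integral_norm_bound[of M "\<lambda>w. g (t - X w) * Y w"] by simp
    have c: "\<bar>EgY g M X Y t\<bar> \<le> sqrt (LINT w|M. F w t)"
      unfolding EgY_def using order_trans[OF a b] .
    have "(EgY g M X Y t)^2 \<le> (sqrt (LINT w|M. F w t))^2"
      using power_mono[OF c abs_ge_zero, of 2] by simp
    also have "\<dots> = (LINT w|M. F w t)" by (simp add: F_def)
    finally show ?case by (simp add: F_def)
  qed
  have E2: "integrable lborel (\<lambda>t. (EgY g M X Y t)^2)"
    by (rule Bochner_Integration.integrable_bound[OF Ii _ pw]) measurable
  show "sq_int (EgY g M X Y)" unfolding sq_int_def using E2 by auto
  have "(LINT t|lborel. (EgY g M X Y t)^2) \<le> (LINT t|lborel. LINT w|M. F w t)"
    by (rule integral_mono_AE[OF E2 Ii]) (use pw in \<open>auto simp: F_def\<close>)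
  then show "(LINT t|lborel. (EgY g M X Y t)^2) \<le> (LINT t|lborel. (g t)^2) * (LINT w|M. (Y w)^2)"
    using II by simp
qed

lemma EgY_inner:
  assumes P: "prob_space M" and g: "sq_int g" and X: "RV_L2 M X" and Y: "RV_L2 M Y" and v: "sq_int v"
  shows "L2_inner (EgY g M X Y) v = (LINT w|M. Y w * pv g v (X w))"
    "integrable M (\<lambda>w. Y w * pv g v (X w))"
proof -
  interpret prob_space M by fact
  interpret P: pair_sigma_finite M lborel by unfold_locales
  have gm[measurable]: "g \<in> borel_measurable borel" using g unfolding sq_int_def by auto
  have vm[measurable]: "v \<in> borel_measurable borel" using v unfolding sq_int_def by auto
  have Xm[measurable]: "X \<in> borel_measurable M" using X unfolding RV_L2_def by auto
  have Ym[measurable]: "Y \<in> borel_measurable M" using Y unfolding RV_L2_def by auto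
  have Yai: "integrable M (\<lambda>w. \<bar>Y w\<bar>)" using RV_facts[OF P Y] by auto
  have pvm[measurable]: "pv g v \<in> borel_measurable borel" using pv_meas[OF v g] .
  define B where "B = L2_norm v * L2_norm g"
  define H where "H w t = v t * g (t - X w) * Y w" for w t
  have Hm[measurable]: "case_prod H \<in> borel_measurable (M \<Otimes>\<^sub>M lborel)" unfolding H_def by measurable
  have Hti: "integrable lborel (H w)" for w
    unfolding H_def using pv_int[OF v g, of "X w"] by auto
  have Ht: "(LINT t|lborel. H w t) = Y w * pv g v (X w)" for w
    unfolding H_def pv_def by (simp add: mult.commute)
  have Hnorm: "(LINT t|lborel. norm (H w t)) \<le> B * \<bar>Y w\<bar>" for w
  proof -
    have "(LINT t|lborel. norm (H w t)) = \<bar>Y w\<bar> * (LINT t|lborel. \<bar>v t * g (t - X w)\<bar>)"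
      unfolding H_def by (simp add: abs_mult mult.commute)
    also have "\<dots> \<le> \<bar>Y w\<bar> * B" unfolding B_def using pv_absbound[OF v g, of "X w"] by (intro mult_left_mono) auto
    finally show ?thesis by (simp add: mult.commute)
  qed
  have Hint: "integrable (M \<Otimes>\<^sub>M lborel) (case_prod H)"
  proof (rule P.Fubini_integrable)
    show "integrable M (\<lambda>x. LINT y|lborel. norm (case_prod H (x, y)))"
    proof (rule Bochner_Integration.integrable_bound)
      show "integrable M (\<lambda>w. B * \<bar>Y w\<bar>)" using Yai by auto
      show "(\<lambda>x. LINT y|lborel. norm (case_prod H (x, y))) \<in> borel_measurable M"
        by (rule lborel.borel_measurable_lebesgue_integral) measurable
      show "AE x in M. norm (LINT y|lborel. norm (case_prod H (x, y))) \<le> norm (B * \<bar>Y x\<bar>)"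
      proof (rule AE_I2)
        fix x
        have "0 \<le> (LINT y|lborel. norm (H x y))" by simp
        then show "norm (LINT y|lborel. norm (case_prod H (x, y))) \<le> norm (B * \<bar>Y x\<bar>)"
          using Hnorm[of x] by simp
      qed
    qed
    show "AE x in M. integrable lborel (\<lambda>y. case_prod H (x, y))" using Hti by simp
  qed fact
  have "(LINT t|lborel. LINT w|M. H w t) = (LINT w|M. LINT t|lborel. H w t)"
    using P.integral_snd[OF Hint] P.integral_fst[OF Hint] by simp
  moreover have "(LINT t|lborel. LINT w|M. H w t) = L2_inner (EgY g M X Y) v"
  proof -
    have "(LINT w|M. H w t) = EgY g M X Y t * v t" for t
    proof -
      have "(\<lambda>w. H w t) = (\<lambda>w. v t * (g (t - X w) * Y w))" unfolding H_def by (auto simp: mult_ac)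
      then show ?thesis unfolding EgY_def by (simp add: mult.commute)
    qed
    then show ?thesis unfolding L2_inner_def by simp
  qed
  ultimately show "L2_inner (EgY g M X Y) v = (LINT w|M. Y w * pv g v (X w))" using Ht by simp
  show "integrable M (\<lambda>w. Y w * pv g v (X w))" using P.integrable_fst[OF Hint] Ht by simp
qed

lemma P2_distr:
  assumes P: "prob_space M" and Z: "RV_L2 M Z"
  shows "P2 (distr M borel Z)"
proof -
  interpret prob_space M by fact
  have Zm[measurable]: "Z \<in> borel_measurable M" and Z2: "integrable M (\<lambda>w. (Z w)^2)" using Z unfolding RV_L2_def by auto
  show ?thesis unfolding P2_def
  proof (intro conjI)
    show "prob_space (distr M borel Z)" by (rule prob_space_distr) simp
    show "sets (distr M borel Z) = sets borel" by simp
    show "integrable (distr M borel Z) (\<lambda>x. x^2)"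
      using integrable_distr_eq[of Z M borel "\<lambda>x. x^2"] Z2 by simp
  qed
qed

lemma RV_L2_add:
  assumes X: "RV_L2 M X" and Y: "RV_L2 M Y"
  shows "RV_L2 M (\<lambda>w. X w + Y w)"
proof -
  have Xm[measurable]: "X \<in> borel_measurable M" and X2: "integrable M (\<lambda>w. (X w)^2)" using X unfolding RV_L2_def by auto
  have Ym[measurable]: "Y \<in> borel_measurable M" and Y2: "integrable M (\<lambda>w. (Y w)^2)" using Y unfolding RV_L2_def by auto
  have "integrable M (\<lambda>w. (X w - (- Y w))^2)" by (rule sq_diff_int) (use X2 Y2 in auto)
  then show ?thesis unfolding RV_L2_def by auto
qed

lemma cdf_distr_eq:
  assumes P: "prob_space M" and Zm[measurable]: "Z \<in> borel_measurable M"
  shows "cdf (distr M borel Z) u = (LINT w|M. (if Z w \<le> u then 1 else 0))"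
proof -
  interpret prob_space M by fact
  have "cdf (distr M borel Z) u = measure M (Z -` {..u} \<inter> space M)"
    unfolding cdf_def2 by (rule measure_distr) auto
  also have "\<dots> = (LINT w|M. indicator (Z -` {..u} \<inter> space M) w)" by simp
  also have "\<dots> = (LINT w|M. (if Z w \<le> u then 1 else 0))"
    by (rule Bochner_Integration.integral_cong) (auto simp: indicator_def)
  finally show ?thesis .
qed

lemma dF_eq:
  assumes P: "prob_space M" and Xm[measurable]: "X \<in> borel_measurable M" and Ym[measurable]: "Y \<in> borel_measurable M"
  shows "cdf (distr M borel (\<lambda>w. X w + Y w)) u - cdf (distr M borel X) u = (LINT w|M. Dfun (X w) (Y w) u)"
proof -
  interpret prob_space M by fact
  have i1: "integrable M (\<lambda>w. (if X w + Y w \<le> u then 1 else 0 :: real))"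
    by (rule integrable_const_bound[where B=1]) auto
  have i2: "integrable M (\<lambda>w. (if X w \<le> u then 1 else 0 :: real))"
    by (rule integrable_const_bound[where B=1]) auto
  have e1: "cdf (distr M borel (\<lambda>w. X w + Y w)) u = (LINT w|M. (if X w + Y w \<le> u then 1 else 0))"
    by (rule cdf_distr_eq[OF P]) measurable
  show ?thesis
    unfolding cdf_distr_eq[OF P Xm] e1 Dfun_alt
    using i1 i2 by simp
qed

lemma lift_diff:
  assumes P: "prob_space M" and g: "sq_int g"
    and g_conv: "\<forall>\<mu>. P2 \<mu> \<longrightarrow>
        (AE t in lborel. integrable lborel (\<lambda>w. g (t - w) * cdf \<mu> w)) \<and> sq_int (fconv g \<mu>)"
    and X: "RV_L2 M X" and Y: "RV_L2 M Y" and v: "sq_int v"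
  shows "L2_inner (lift g M (\<lambda>w. X w + Y w)) v - L2_inner (lift g M X) v
      = (LINT w|M. - Y w * (LINT l:{0..1}|lborel. pv g v (X w + l * Y w)))"
    "integrable M (\<lambda>w. - Y w * (LINT l:{0..1}|lborel. pv g v (X w + l * Y w)))"
proof -
  interpret prob_space M by fact
  interpret P: pair_sigma_finite M lborel by unfold_locales
  have gm[measurable]: "g \<in> borel_measurable borel" using g unfolding sq_int_def by auto
  have vm[measurable]: "v \<in> borel_measurable borel" and v2: "integrable lborel (\<lambda>t. (v t)^2)"
    using v unfolding sq_int_def by auto
  have Xm[measurable]: "X \<in> borel_measurable M" using X unfolding RV_L2_def by auto
  have Ym[measurable]: "Y \<in> borel_measurable M" using Y unfolding RV_L2_def by auto
  have Yai: "integrable M (\<lambda>w. \<bar>Y w\<bar>)" using RV_facts[OF P Y] by auto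
  have pvm[measurable]: "pv g v \<in> borel_measurable borel" using pv_meas[OF v g] .
  define B where "B = L2_norm v * L2_norm g"
  have B0: "0 \<le> B" unfolding B_def L2_norm_def by simp
  have pvB: "\<bar>pv g v s\<bar> \<le> B" for s unfolding B_def by (rule pv_bound[OF v g])
  define Z where "Z = (\<lambda>w. X w + Y w)"
  have Zm[measurable]: "Z \<in> borel_measurable M" unfolding Z_def by measurable
  have Z: "RV_L2 M Z" unfolding Z_def by (rule RV_L2_add[OF X Y])
  define dF where "dF u = (LINT w|M. Dfun (X w) (Y w) u)" for u
  have dFm[measurable]: "dF \<in> borel_measurable borel"
  proof -
    have "(\<lambda>u. LINT w|M. Dfun (X w) (Y w) u) \<in> borel_measurable borel"
      by (rule borel_measurable_lebesgue_integral) measurable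
    then show ?thesis unfolding dF_def[abs_def] .
  qed
  have dF_eq': "cdf (distr M borel Z) u - cdf (distr M borel X) u = dF u" for u
    unfolding Z_def dF_def by (rule dF_eq[OF P Xm Ym])
  have gcZ: "AE t in lborel. integrable lborel (\<lambda>w. g (t - w) * cdf (distr M borel Z) w)"
    and sqZ: "sq_int (lift g M Z)"
    using g_conv P2_distr[OF P Z] unfolding lift_def by auto
  have gcX: "AE t in lborel. integrable lborel (\<lambda>w. g (t - w) * cdf (distr M borel X) w)"
    and sqX: "sq_int (lift g M X)"
    using g_conv P2_distr[OF P X] unfolding lift_def by auto
  have lZm[measurable]: "lift g M Z \<in> borel_measurable borel" using sqZ unfolding sq_int_def by auto
  have lXm[measurable]: "lift g M X \<in> borel_measurable borel" using sqX unfolding sq_int_def by auto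
  have stepA: "AE t in lborel. lift g M Z t - lift g M X t = (LINT u|lborel. g (t - u) * dF u)"
    using gcZ gcX
  proof eventually_elim
    case (elim t)
    have "lift g M Z t - lift g M X t = (LINT u|lborel. g (t - u) * cdf (distr M borel Z) u - g (t - u) * cdf (distr M borel X) u)"
      unfolding lift_def fconv_def using elim by simp
    also have "\<dots> = (LINT u|lborel. g (t - u) * dF u)"
      using dF_eq' by (simp add: right_diff_distrib[symmetric])
    finally show ?case .
  qed
  have inner1: "L2_inner (lift g M Z) v - L2_inner (lift g M X) v = (LINT t|lborel. v t * (LINT u|lborel. g (t - u) * dF u))"
  proof -
    have iZ: "integrable lborel (\<lambda>t. lift g M Z t * v t)"
      by (rule cs_integrable) (use sqZ v in \<open>auto simp: sq_int_def\<close>)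
    have iX: "integrable lborel (\<lambda>t. lift g M X t * v t)"
      by (rule cs_integrable) (use sqX v in \<open>auto simp: sq_int_def\<close>)
    have "L2_inner (lift g M Z) v - L2_inner (lift g M X) v = (LINT t|lborel. (lift g M Z t - lift g M X t) * v t)"
      unfolding L2_inner_def using iZ iX by (simp add: left_diff_distrib)
    also have "\<dots> = (LINT t|lborel. v t * (LINT u|lborel. g (t - u) * dF u))"
    proof (rule integral_cong_AE)
      show "(\<lambda>t. (lift g M Z t - lift g M X t) * v t) \<in> borel_measurable lborel" by measurable
      show "(\<lambda>t. v t * (LINT u|lborel. g (t - u) * dF u)) \<in> borel_measurable lborel"
        by measurable
      show "AE t in lborel. (lift g M Z t - lift g M X t) * v t = v t * (LINT u|lborel. g (t - u) * dF u)"
        using stepA by eventually_elim simp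
    qed
    finally show ?thesis .
  qed
  define A where "A w u = \<bar>Dfun (X w) (Y w) u\<bar>" for w u
  have Aint: "integrable (M \<Otimes>\<^sub>M lborel) (case_prod A)"
  proof (rule P.Fubini_integrable)
    show "case_prod A \<in> borel_measurable (M \<Otimes>\<^sub>M lborel)" unfolding A_def by measurable
    show "integrable M (\<lambda>x. LINT y|lborel. norm (case_prod A (x, y)))"
      using Yai by (simp add: A_def Dfun_abs_int)
    show "AE x in M. integrable lborel (\<lambda>y. case_prod A (x, y))"
      by (simp add: A_def Dfun_abs_int)
  qed
  have dFi: "integrable lborel dF"
  proof (rule Bochner_Integration.integrable_bound)
    show "integrable lborel (\<lambda>u. LINT w|M. A w u)" using P.integrable_snd[OF Aint] .
    show "dF \<in> borel_measurable lborel" by simp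
    show "AE u in lborel. norm (dF u) \<le> norm (LINT w|M. A w u)"
    proof (rule AE_I2)
      fix u
      have "norm (dF u) \<le> (LINT w|M. A w u)" unfolding dF_def A_def
        using integral_norm_bound[of M "\<lambda>w. Dfun (X w) (Y w) u"] by simp
      then show "norm (dF u) \<le> norm (LINT w|M. A w u)" by simp
    qed
  qed
  define K where "K u t = v t * g (t - u) * dF u" for u t
  have Kint: "integrable (lborel \<Otimes>\<^sub>M lborel) (case_prod K)"
  proof (rule lborel_pair.Fubini_integrable)
    show "case_prod K \<in> borel_measurable (lborel \<Otimes>\<^sub>M lborel)" unfolding K_def by measurable
    show "integrable lborel (\<lambda>x. LINT y|lborel. norm (case_prod K (x, y)))"
    proof (rule Bochner_Integration.integrable_bound)
      show "integrable lborel (\<lambda>u. B * \<bar>dF u\<bar>)" using dFi by auto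
      show "(\<lambda>x. LINT y|lborel. norm (case_prod K (x, y))) \<in> borel_measurable lborel"
        by (rule lborel.borel_measurable_lebesgue_integral) (unfold K_def, measurable)
      show "AE x in lborel. norm (LINT y|lborel. norm (case_prod K (x, y))) \<le> norm (B * \<bar>dF x\<bar>)"
      proof (rule AE_I2)
        fix u
        have "(LINT t|lborel. norm (K u t)) = \<bar>dF u\<bar> * (LINT t|lborel. \<bar>v t * g (t - u)\<bar>)"
          unfolding K_def by (simp add: abs_mult mult_ac)
        also have "\<dots> \<le> \<bar>dF u\<bar> * B" unfolding B_def using pv_absbound[OF v g, of u] by (intro mult_left_mono) auto
        finally have "(LINT t|lborel. norm (K u t)) \<le> B * \<bar>dF u\<bar>" by (simp add: mult.commute)
        moreover have "0 \<le> (LINT t|lborel. norm (K u t))" by simp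
        ultimately show "norm (LINT y|lborel. norm (case_prod K (u, y))) \<le> norm (B * \<bar>dF u\<bar>)"
          using B0 by (simp add: abs_mult)
      qed
    qed
    show "AE x in lborel. integrable lborel (\<lambda>y. case_prod K (x, y))"
      unfolding K_def using pv_int[OF v g] by auto
  qed
  have stepB: "(LINT t|lborel. v t * (LINT u|lborel. g (t - u) * dF u)) = (LINT u|lborel. dF u * pv g v u)"
  proof -
    have "(LINT t|lborel. LINT u|lborel. K u t) = (LINT u|lborel. LINT t|lborel. K u t)"
      using lborel_pair.integral_snd[OF Kint] lborel_pair.integral_fst[OF Kint] by simp
    moreover have "(LINT u|lborel. K u t) = v t * (LINT u|lborel. g (t - u) * dF u)" for t
      unfolding K_def by (simp add: mult.assoc)
    moreover have "(LINT t|lborel. K u t) = dF u * pv g v u" for u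
      unfolding K_def pv_def by (simp add: mult.commute)
    ultimately show ?thesis by simp
  qed
  define J where "J w u = Dfun (X w) (Y w) u * pv g v u" for w u
  have Jbound: "\<bar>J w u\<bar> \<le> B * \<bar>Dfun (X w) (Y w) u\<bar>" for w u
    unfolding J_def using mult_right_mono[OF pvB[of u] abs_ge_zero[of "Dfun (X w) (Y w) u"]] by (simp add: abs_mult mult.commute)
  have Jti: "integrable lborel (J w)" for w
  proof (rule Bochner_Integration.integrable_bound)
    show "integrable lborel (\<lambda>u. B * \<bar>Dfun (X w) (Y w) u\<bar>)" using Dfun_abs_int(1) by auto
    show "J w \<in> borel_measurable lborel" unfolding J_def by measurable
    show "AE u in lborel. norm (J w u) \<le> norm (B * \<bar>Dfun (X w) (Y w) u\<bar>)"
      using Jbound B0 by (simp add: abs_mult)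
  qed
  have Jint: "integrable (M \<Otimes>\<^sub>M lborel) (case_prod J)"
  proof (rule P.Fubini_integrable)
    show "case_prod J \<in> borel_measurable (M \<Otimes>\<^sub>M lborel)" unfolding J_def by measurable
    show "integrable M (\<lambda>x. LINT y|lborel. norm (case_prod J (x, y)))"
    proof (rule Bochner_Integration.integrable_bound)
      show "integrable M (\<lambda>w. B * \<bar>Y w\<bar>)" using Yai by auto
      show "(\<lambda>x. LINT y|lborel. norm (case_prod J (x, y))) \<in> borel_measurable M"
        by (rule lborel.borel_measurable_lebesgue_integral) (unfold J_def, measurable)
      show "AE x in M. norm (LINT y|lborel. norm (case_prod J (x, y))) \<le> norm (B * \<bar>Y x\<bar>)"
      proof (rule AE_I2)
        fix w
        have "(LINT u|lborel. \<bar>J w u\<bar>) \<le> (LINT u|lborel. B * \<bar>Dfun (X w) (Y w) u\<bar>)"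
          by (rule integral_mono) (use Jti Dfun_abs_int(1) Jbound in auto)
        also have "\<dots> = B * \<bar>Y w\<bar>" using Dfun_abs_int(2) by simp
        finally have "(LINT u|lborel. \<bar>J w u\<bar>) \<le> B * \<bar>Y w\<bar>" .
        moreover have "0 \<le> (LINT u|lborel. \<bar>J w u\<bar>)" by simp
        ultimately show "norm (LINT y|lborel. norm (case_prod J (w, y))) \<le> norm (B * \<bar>Y w\<bar>)"
          using B0 by (simp add: abs_mult)
      qed
    qed
    show "AE x in M. integrable lborel (\<lambda>y. case_prod J (x, y))" using Jti by simp
  qed
  have J1: "(LINT w|M. J w u) = dF u * pv g v u" for u
    unfolding J_def dF_def by simp
  have J2: "(LINT u|lborel. J w u) = - Y w * (LINT l:{0..1}|lborel. pv g v (X w + l * Y w))" for w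
    unfolding J_def by (rule Dfun_subst) simp
  have "(LINT u|lborel. dF u * pv g v u) = (LINT w|M. LINT u|lborel. J w u)"
    using P.integral_snd[OF Jint] P.integral_fst[OF Jint] J1 by simp
  then show "L2_inner (lift g M (\<lambda>w. X w + Y w)) v - L2_inner (lift g M X) v
      = (LINT w|M. - Y w * (LINT l:{0..1}|lborel. pv g v (X w + l * Y w)))"
    using inner1 stepB J2 unfolding Z_def by simp
  show "integrable M (\<lambda>w. - Y w * (LINT l:{0..1}|lborel. pv g v (X w + l * Y w)))"
    using P.integrable_fst[OF Jint] J2 by simp
qed

lemma ind01: "integrable lborel (indicator {0..1::real} :: real \<Rightarrow> real)"
  by (rule integrable_real_indicator) auto

lemma set01_bound:
  fixes F :: "real \<Rightarrow> real"
  assumes "\<And>l. l \<in> {0..1} \<Longrightarrow> \<bar>F l\<bar> \<le> K"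
  shows "\<bar>LINT l:{0..1}|lborel. F l\<bar> \<le> K"
proof -
  have K0: "0 \<le> K" using assms[of 0] by auto
  have "\<bar>LINT l:{0..1}|lborel. F l\<bar> \<le> (LINT l|lborel. \<bar>indicator {0..1} l * F l\<bar>)"
    unfolding set_lebesgue_integral_def using integral_norm_bound[of lborel "\<lambda>l. indicator {0..1} l * F l"] by simp
  also have "\<dots> \<le> (LINT (l::real)|lborel. indicator {0..1} l * K)"
  proof (rule Bochner_Integration.integral_mono')
    show "integrable lborel (\<lambda>l::real. indicator {0..1} l * K :: real)" using ind01 by simp
    show "\<bar>indicator {0..1} l * F l\<bar> \<le> indicator {0..1} l * K" for l
      using assms[of l] by (auto simp: indicator_def)
    show "0 \<le> indicator {0..1} l * K" for l using K0 by auto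
  qed
  also have "\<dots> = K" by simp
  finally show ?thesis .
qed

lemma set01_int:
  fixes F :: "real \<Rightarrow> real"
  assumes [measurable]: "F \<in> borel_measurable borel" and "\<And>l. \<bar>F l\<bar> \<le> K"
  shows "integrable lborel (\<lambda>l. indicator {0..1} l * F l)"
proof (rule Bochner_Integration.integrable_bound)
  show "integrable lborel (\<lambda>l::real. indicator {0..1} l * K :: real)" using ind01 by simp
  show "(\<lambda>l. indicator {0..1} l * F l) \<in> borel_measurable lborel" by measurable
  show "AE x in lborel. norm (indicator {0..1} x * F x) \<le> norm (indicator {0..1::real} x * K :: real)"
    using assms(2) by (intro AE_I2) (auto simp: indicator_def intro: order_trans[OF _ abs_ge_self])
qed

lemma Rem_eq:
  assumes P: "prob_space M" and g: "sq_int g" and X: "RV_L2 M X" and Y: "RV_L2 M Y" and v: "sq_int v"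
    and i1: "integrable M (\<lambda>w. - Y w * (LINT l:{0..1}|lborel. pv g v (X w + l * Y w)))"
    and i2: "integrable M (\<lambda>w. Y w * pv g v (X w))"
  shows "Rem g M X Y v = (LINT w|M. - Y w * (LINT l:{0..1}|lborel. pv g v (X w + l * Y w))) + (LINT w|M. Y w * pv g v (X w))"
proof -
  have pvm[measurable]: "pv g v \<in> borel_measurable borel" using pv_meas[OF v g] .
  define B where "B = L2_norm v * L2_norm g"
  have pvB: "\<bar>pv g v s\<bar> \<le> B" for s unfolding B_def by (rule pv_bound[OF v g])
  have inner: "(LINT l:{0..1}|lborel. (pv g v (x + l * y) - pv g v x) * y)
      = y * (LINT l:{0..1}|lborel. pv g v (x + l * y)) - y * pv g v x" for x y
  proof -
    have ia: "integrable lborel (\<lambda>l. indicator {0..1} l * pv g v (x + l * y))"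
      by (rule set01_int[where K=B]) (use pvB in auto)
    have "(LINT l:{0..1}|lborel. (pv g v (x + l * y) - pv g v x) * y)
        = (LINT l|lborel. y * (indicator {0..1} l * pv g v (x + l * y)) - (y * pv g v x) * indicator {0..1} l)"
      unfolding set_lebesgue_integral_def by (rule Bochner_Integration.integral_cong) (auto simp: algebra_simps)
    also have "\<dots> = y * (LINT l|lborel. indicator {0..1} l * pv g v (x + l * y)) - (y * pv g v x) * (LINT (l::real)|lborel. indicator {0..1} l)"
      using ia by simp
    also have "\<dots> = y * (LINT l:{0..1}|lborel. pv g v (x + l * y)) - y * pv g v x"
      unfolding set_lebesgue_integral_def by (simp add: content_real)
    finally show ?thesis .
  qed
  have "Rem g M X Y v = - (LINT w|M. Y w * (LINT l:{0..1}|lborel. pv g v (X w + l * Y w)) - Y w * pv g v (X w))"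
    unfolding Rem_def conv_pv inner by simp
  also have "\<dots> = (LINT w|M. - Y w * (LINT l:{0..1}|lborel. pv g v (X w + l * Y w))) + (LINT w|M. Y w * pv g v (X w))"
  proof -
    have "(LINT w|M. Y w * (LINT l:{0..1}|lborel. pv g v (X w + l * Y w)) - Y w * pv g v (X w))
       = (LINT w|M. - (- Y w * (LINT l:{0..1}|lborel. pv g v (X w + l * Y w))) - Y w * pv g v (X w))"
      by simp
    also have "\<dots> = - (LINT w|M. - Y w * (LINT l:{0..1}|lborel. pv g v (X w + l * Y w))) - (LINT w|M. Y w * pv g v (X w))"
      using i1 i2 by (simp del: mult_minus_left)
    finally show ?thesis by simp
  qed
  finally show ?thesis .
qed

lemma Rem_bound:
  assumes P: "prob_space M" and g: "sq_int g" and X: "RV_L2 M X"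
  shows "\<forall>e>0. \<exists>d>0. \<forall>Y. RV_L2 M Y \<and> RV_norm M Y < d \<longrightarrow>
           (\<forall>v. sq_int v \<longrightarrow> \<bar>Rem g M X Y v\<bar> \<le> e * (L2_norm v * RV_norm M Y))"
proof (intro allI impI)
  fix e :: real assume e: "e > 0"
  interpret prob_space M by fact
  have "(e/2)^2 > 0" using e by simp
  then obtain \<eta> where \<eta>: "\<eta> > 0" "\<And>h. \<bar>h\<bar> < \<eta> \<Longrightarrow> (LINT x|lborel. (g (x+h) - g x)^2) \<le> (e/2)^2"
    using L2_trans_cont[OF g] by blast
  define G where "G = L2_norm g"
  have G0: "0 \<le> G" unfolding G_def L2_norm_def by simp
  define d where "d = e * \<eta> / (4 * G + 1)"
  have d0: "d > 0" unfolding d_def using e \<eta> G0 by simp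
  show "\<exists>d>0. \<forall>Y. RV_L2 M Y \<and> RV_norm M Y < d \<longrightarrow>
           (\<forall>v. sq_int v \<longrightarrow> \<bar>Rem g M X Y v\<bar> \<le> e * (L2_norm v * RV_norm M Y))"
  proof (intro exI[of _ d] conjI allI impI)
    show "d > 0" by fact
    fix Y v assume Yd: "RV_L2 M Y \<and> RV_norm M Y < d" and v: "sq_int v"
    have Y: "RV_L2 M Y" using Yd by auto
    note Yf = RV_facts[OF P Y]
    define N where "N = L2_norm v"
    have N0: "0 \<le> N" unfolding N_def L2_norm_def by simp
    define Yn where "Yn = RV_norm M Y"
    have Yn0: "0 \<le> Yn" unfolding Yn_def RV_norm_def by simp
    have Ynd: "Yn < d" using Yd unfolding Yn_def by simp
    have EY2: "(LINT w|M. (Y w)^2) = Yn^2" unfolding Yn_def RV_norm_def by simp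
    have EYa: "(LINT w|M. \<bar>Y w\<bar>) \<le> Yn" using Yf(5) unfolding Yn_def .
    define c where "c w = N * (e/2 + 2 * G * \<bar>Y w\<bar> / \<eta>)" for w
    have pvdiff: "\<bar>pv g v (X w + l * Y w) - pv g v (X w)\<bar> \<le> c w" if l: "l \<in> {0..1}" for w l
    proof (cases "\<bar>Y w\<bar> < \<eta>")
      case True
      have "\<bar>l * Y w\<bar> \<le> \<bar>Y w\<bar>" using l by (auto simp: abs_mult intro: mult_left_le_one_le)
      then have "\<bar>- (l * Y w)\<bar> < \<eta>" using True by simp
      then have "(LINT x|lborel. (g (x + - (l * Y w)) - g x)^2) \<le> (e/2)^2" by (rule \<eta>(2))
      then have "sqrt (LINT x|lborel. (g (x - l * Y w) - g x)^2) \<le> sqrt ((e/2)^2)"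
        by (intro real_sqrt_le_mono) simp
      also have "\<dots> = e/2" using e by simp
      finally have s: "sqrt (LINT x|lborel. (g (x - l * Y w) - g x)^2) \<le> e/2" .
      have "\<bar>pv g v (X w + l * Y w) - pv g v (X w)\<bar> \<le> N * sqrt (LINT x|lborel. (g (x - l * Y w) - g x)^2)"
        unfolding N_def by (rule pv_lip[OF v g])
      also have "\<dots> \<le> N * (e/2)" using s N0 by (intro mult_left_mono) auto
      also have "\<dots> \<le> c w" unfolding c_def using N0 G0 \<eta>(1)
        by (intro mult_left_mono) (auto intro!: divide_nonneg_pos)
      finally show ?thesis .
    next
      case False
      have "\<bar>pv g v (X w + l * Y w) - pv g v (X w)\<bar> \<le> \<bar>pv g v (X w + l * Y w)\<bar> + \<bar>pv g v (X w)\<bar>" by simp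
      also have "\<dots> \<le> N * G + N * G" unfolding N_def G_def using pv_bound[OF v g] by (intro add_mono) auto
      also have "\<dots> = N * (2 * G * 1)" by simp
      also have "\<dots> \<le> N * (2 * G * (\<bar>Y w\<bar> / \<eta>))"
        using False \<eta>(1) N0 G0 by (intro mult_left_mono) auto
      also have "\<dots> \<le> c w" unfolding c_def using N0 e by (intro mult_left_mono) auto
      finally show ?thesis .
    qed
    have inner: "\<bar>LINT l:{0..1}|lborel. (conv_fun v (gcheck g) (X w + l * Y w) - conv_fun v (gcheck g) (X w)) * Y w\<bar>
        \<le> \<bar>Y w\<bar> * c w" for w
      unfolding conv_pv
    proof (rule set01_bound)
      fix l :: real assume l: "l \<in> {0..1}"
      show "\<bar>(pv g v (X w + l * Y w) - pv g v (X w)) * Y w\<bar> \<le> \<bar>Y w\<bar> * c w"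
        using mult_left_mono[OF pvdiff[OF l, of w] abs_ge_zero[of "Y w"]] by (simp add: abs_mult mult.commute)
    qed
    have cint: "integrable M (\<lambda>w. \<bar>Y w\<bar> * c w)"
    proof -
      have "(\<lambda>w. \<bar>Y w\<bar> * c w) = (\<lambda>w. (N * e / 2) * \<bar>Y w\<bar> + (N * 2 * G / \<eta>) * (Y w)^2)"
        unfolding c_def by (auto simp: field_simps power2_eq_square abs_mult_self_eq)
      then show ?thesis using Yf by simp
    qed
    have "\<bar>Rem g M X Y v\<bar> \<le> (LINT w|M. \<bar>LINT l:{0..1}|lborel. (conv_fun v (gcheck g) (X w + l * Y w) - conv_fun v (gcheck g) (X w)) * Y w\<bar>)"
      unfolding Rem_def using integral_norm_bound[of M "\<lambda>w. LINT l:{0..1}|lborel. (conv_fun v (gcheck g) (X w + l * Y w) - conv_fun v (gcheck g) (X w)) * Y w"]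
      by simp
    also have "\<dots> \<le> (LINT w|M. \<bar>Y w\<bar> * c w)"
      by (rule Bochner_Integration.integral_mono'[OF cint inner]) (use N0 G0 e \<eta>(1) in \<open>auto simp: c_def\<close>)
    also have "(LINT w|M. \<bar>Y w\<bar> * c w) = (N * e / 2) * (LINT w|M. \<bar>Y w\<bar>) + (N * 2 * G / \<eta>) * (LINT w|M. (Y w)^2)"
    proof -
      have "(\<lambda>w. \<bar>Y w\<bar> * c w) = (\<lambda>w. (N * e / 2) * \<bar>Y w\<bar> + (N * 2 * G / \<eta>) * (Y w)^2)"
        unfolding c_def by (auto simp: field_simps power2_eq_square abs_mult_self_eq)
      then show ?thesis using Yf by simp
    qed
    also have "\<dots> \<le> (N * e / 2) * Yn + (N * 2 * G / \<eta>) * Yn^2"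
      unfolding EY2 using EYa N0 e G0 \<eta>(1) by (intro add_mono mult_left_mono) auto
    also have "(N * 2 * G / \<eta>) * Yn^2 \<le> (N * e / 2) * Yn"
    proof -
      have "2 * G / \<eta> * Yn \<le> 2 * G / \<eta> * d" using Ynd G0 \<eta>(1) by (intro mult_left_mono) auto
      also have "\<dots> = e * (2 * G / (4 * G + 1))" unfolding d_def using \<eta>(1) G0 by (simp add: field_simps)
      also have "\<dots> \<le> e * (1/2)" using e G0 by (intro mult_left_mono) (auto simp: field_simps)
      finally have "2 * G / \<eta> * Yn \<le> e / 2" by simp
      then have "(N * Yn) * (2 * G / \<eta> * Yn) \<le> (N * Yn) * (e / 2)" using N0 Yn0 by (intro mult_left_mono) auto
      then show ?thesis by (simp add: power2_eq_square mult_ac)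
    qed
    finally show "\<bar>Rem g M X Y v\<bar> \<le> e * (L2_norm v * RV_norm M Y)"
      unfolding N_def[symmetric] Yn_def[symmetric] by (simp add: field_simps)
  qed
qed

lemma sq_int_add:
  assumes "sq_int a" "sq_int b"
  shows "sq_int (\<lambda>t. a t + b t)"
proof -
  have [measurable]: "a \<in> borel_measurable borel" "b \<in> borel_measurable borel" using assms unfolding sq_int_def by auto
  have "integrable lborel (\<lambda>t. (a t - (- b t))^2)" by (rule sq_diff_int) (use assms in \<open>auto simp: sq_int_def\<close>)
  then show ?thesis unfolding sq_int_def by auto
qed

lemma sq_int_uminus: "sq_int a \<Longrightarrow> sq_int (\<lambda>t. - a t)"
  unfolding sq_int_def by auto

theorem lemma3p14:
  fixes M :: "'a::polish_space measure" and g :: "real \<Rightarrow> real" and X :: "'a \<Rightarrow> real"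
  assumes "prob_space M" and "space M = UNIV"
    and "complete_measure_space M" and "atomless M"
    and g_L2: "sq_int g"
    and g_bdd: "\<exists>C. AE x in lborel. \<bar>g x\<bar> \<le> C"
    and g_conv: "\<forall>\<mu>. P2 \<mu> \<longrightarrow>
        (AE t in lborel. integrable lborel (\<lambda>w. g (t - w) * cdf \<mu> w)) \<and> sq_int (fconv g \<mu>)"
    and X: "RV_L2 M X"
  shows
    "(\<forall>Y v. RV_L2 M Y \<longrightarrow> sq_int v \<longrightarrow>
        L2_inner (lift g M (\<lambda>w. X w + Y w)) v
          = L2_inner (lift g M X) v - L2_inner (EgY g M X Y) v + Rem g M X Y v)
     \<and> (\<forall>\<epsilon>>0. \<exists>\<delta>>0. \<forall>Y. RV_L2 M Y \<and> RV_norm M Y < \<delta> \<longrightarrow>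
          (\<forall>v. sq_int v \<and> L2_norm v \<le> 1 \<longrightarrow> \<bar>Rem g M X Y v\<bar> \<le> \<epsilon> * RV_norm M Y))
     \<and> (\<forall>Y. RV_L2 M Y \<longrightarrow> sq_int (EgY g M X Y))
     \<and> (\<exists>C. \<forall>Y. RV_L2 M Y \<longrightarrow> L2_norm (EgY g M X Y) \<le> C * RV_norm M Y)
     \<and> (\<forall>\<epsilon>>0. \<exists>\<delta>>0. \<forall>Y. RV_L2 M Y \<and> RV_norm M Y < \<delta> \<longrightarrow>
          L2_norm (\<lambda>t. lift g M (\<lambda>w. X w + Y w) t - lift g M X t - (- EgY g M X Y t))
            \<le> \<epsilon> * RV_norm M Y)"
proof -
  note P = assms(1)
  have part1: "L2_inner (lift g M (\<lambda>w. X w + Y w)) v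
          = L2_inner (lift g M X) v - L2_inner (EgY g M X Y) v + Rem g M X Y v"
    if Y: "RV_L2 M Y" and v: "sq_int v" for Y v
  proof -
    note ld = lift_diff[OF P g_L2 g_conv X Y v]
    note ei = EgY_inner[OF P g_L2 X Y v]
    have "Rem g M X Y v = (LINT w|M. - Y w * (LINT l:{0..1}|lborel. pv g v (X w + l * Y w))) + (LINT w|M. Y w * pv g v (X w))"
      by (rule Rem_eq[OF P g_L2 X Y v ld(2) ei(2)])
    then show ?thesis using ld(1) ei(1) by simp
  qed
  have part2: "\<forall>\<epsilon>>0. \<exists>\<delta>>0. \<forall>Y. RV_L2 M Y \<and> RV_norm M Y < \<delta> \<longrightarrow>
          (\<forall>v. sq_int v \<and> L2_norm v \<le> 1 \<longrightarrow> \<bar>Rem g M X Y v\<bar> \<le> \<epsilon> * RV_norm M Y)"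
  proof (intro allI impI)
    fix e :: real assume e: "e > 0"
    obtain d where d: "d > 0" "\<And>Y v. RV_L2 M Y \<and> RV_norm M Y < d \<Longrightarrow> sq_int v \<Longrightarrow> \<bar>Rem g M X Y v\<bar> \<le> e * (L2_norm v * RV_norm M Y)"
      using Rem_bound[OF P g_L2 X] e by blast
    show "\<exists>\<delta>>0. \<forall>Y. RV_L2 M Y \<and> RV_norm M Y < \<delta> \<longrightarrow>
          (\<forall>v. sq_int v \<and> L2_norm v \<le> 1 \<longrightarrow> \<bar>Rem g M X Y v\<bar> \<le> e * RV_norm M Y)"
    proof (intro exI[of _ d] conjI allI impI)
      show "d > 0" by fact
      fix Y v assume Y: "RV_L2 M Y \<and> RV_norm M Y < d" and v: "sq_int v \<and> L2_norm v \<le> 1"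
      have "\<bar>Rem g M X Y v\<bar> \<le> e * (L2_norm v * RV_norm M Y)" using d(2) Y v by blast
      also have "\<dots> \<le> e * (1 * RV_norm M Y)"
        using v e by (intro mult_left_mono mult_right_mono) (auto simp: RV_norm_def)
      finally show "\<bar>Rem g M X Y v\<bar> \<le> e * RV_norm M Y" by simp
    qed
  qed
  have part3: "\<forall>Y. RV_L2 M Y \<longrightarrow> sq_int (EgY g M X Y)"
    using EgY_sq(1)[OF P g_L2 X] by blast
  have part4: "\<exists>C. \<forall>Y. RV_L2 M Y \<longrightarrow> L2_norm (EgY g M X Y) \<le> C * RV_norm M Y"
  proof (intro exI[of _ "L2_norm g"] allI impI)
    fix Y assume Y: "RV_L2 M Y"
    have "sqrt (LINT t|lborel. (EgY g M X Y t)^2) \<le> sqrt ((LINT t|lborel. (g t)^2) * (LINT w|M. (Y w)^2))"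
      using EgY_sq(2)[OF P g_L2 X Y] by (rule real_sqrt_le_mono)
    then show "L2_norm (EgY g M X Y) \<le> L2_norm g * RV_norm M Y"
      unfolding L2_norm_def RV_norm_def by (simp add: real_sqrt_mult)
  qed
  have part5: "\<forall>\<epsilon>>0. \<exists>\<delta>>0. \<forall>Y. RV_L2 M Y \<and> RV_norm M Y < \<delta> \<longrightarrow>
          L2_norm (\<lambda>t. lift g M (\<lambda>w. X w + Y w) t - lift g M X t - (- EgY g M X Y t))
            \<le> \<epsilon> * RV_norm M Y"
  proof (intro allI impI)
    fix e :: real assume e: "e > 0"
    obtain d where d: "d > 0" "\<And>Y v. RV_L2 M Y \<and> RV_norm M Y < d \<Longrightarrow> sq_int v \<Longrightarrow> \<bar>Rem g M X Y v\<bar> \<le> e * (L2_norm v * RV_norm M Y)"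
      using Rem_bound[OF P g_L2 X] e by blast
    show "\<exists>\<delta>>0. \<forall>Y. RV_L2 M Y \<and> RV_norm M Y < \<delta> \<longrightarrow>
          L2_norm (\<lambda>t. lift g M (\<lambda>w. X w + Y w) t - lift g M X t - (- EgY g M X Y t))
            \<le> e * RV_norm M Y"
    proof (intro exI[of _ d] conjI allI impI)
      show "d > 0" by fact
      fix Y assume Yd: "RV_L2 M Y \<and> RV_norm M Y < d"
      have Y: "RV_L2 M Y" using Yd by auto
      define h where "h t = lift g M (\<lambda>w. X w + Y w) t - lift g M X t - (- EgY g M X Y t)" for t
      have sZ: "sq_int (lift g M (\<lambda>w. X w + Y w))"
        using g_conv P2_distr[OF P RV_L2_add[OF X Y]] unfolding lift_def by auto
      have sX: "sq_int (lift g M X)"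
        using g_conv P2_distr[OF P X] unfolding lift_def by auto
      have sE: "sq_int (EgY g M X Y)" using part3 Y by auto
      have sh: "sq_int h"
      proof -
        have "sq_int (\<lambda>t. lift g M (\<lambda>w. X w + Y w) t + (- lift g M X t))"
          by (rule sq_int_add[OF sZ sq_int_uminus[OF sX]])
        then have "sq_int (\<lambda>t. (lift g M (\<lambda>w. X w + Y w) t + (- lift g M X t)) + EgY g M X Y t)"
          by (rule sq_int_add[OF _ sE])
        then show ?thesis unfolding h_def by simp
      qed
      have i1: "integrable lborel (\<lambda>t. lift g M (\<lambda>w. X w + Y w) t * h t)"
        by (rule cs_integrable) (use sZ sh in \<open>auto simp: sq_int_def\<close>)
      have i2: "integrable lborel (\<lambda>t. lift g M X t * h t)"
        by (rule cs_integrable) (use sX sh in \<open>auto simp: sq_int_def\<close>)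
      have i3: "integrable lborel (\<lambda>t. EgY g M X Y t * h t)"
        by (rule cs_integrable) (use sE sh in \<open>auto simp: sq_int_def\<close>)
      have "(LINT t|lborel. (h t)^2) = (LINT t|lborel. lift g M (\<lambda>w. X w + Y w) t * h t - lift g M X t * h t + EgY g M X Y t * h t)"
        by (rule Bochner_Integration.integral_cong) (auto simp: h_def power2_eq_square algebra_simps)
      also have "\<dots> = L2_inner (lift g M (\<lambda>w. X w + Y w)) h - L2_inner (lift g M X) h + L2_inner (EgY g M X Y) h"
        unfolding L2_inner_def using i1 i2 i3 by simp
      also have "\<dots> = Rem g M X Y h" using part1[OF Y sh] by simp
      finally have hh0: "(LINT t|lborel. (h t)^2) = Rem g M X Y h" .
      have nn: "0 \<le> (LINT t|lborel. (h t)^2)" by simp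
      have hh: "(L2_norm h)^2 = Rem g M X Y h" unfolding L2_norm_def using nn hh0 by simp
      have Rb: "\<bar>Rem g M X Y h\<bar> \<le> e * (L2_norm h * RV_norm M Y)" using d(2) Yd sh by blast
      have hn0: "0 \<le> L2_norm h" unfolding L2_norm_def by simp
      have "L2_norm h \<le> e * RV_norm M Y"
      proof (cases "L2_norm h = 0")
        case True then show ?thesis using e by (simp add: RV_norm_def)
      next
        case False
        then have pos: "L2_norm h > 0" using hn0 by simp
        have "L2_norm h * L2_norm h \<le> L2_norm h * (e * RV_norm M Y)"
          using hh Rb by (simp add: power2_eq_square mult_ac)
        then show ?thesis using pos by simp
      qed
      then show "L2_norm (\<lambda>t. lift g M (\<lambda>w. X w + Y w) t - lift g M X t - (- EgY g M X Y t)) \<le> e * RV_norm M Y"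
        unfolding h_def[abs_def] .
    qed
  qed
  show ?thesis using part1 part2 part3 part4 part5 by blast
qed


end
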